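(* Let $\mathcal{H}$ be a real Hilbert space of dimension $d>1$, $G>0$, $\mathcal{G}=\{g\in\mathcal{H}:\|g\|\le G\}$, $\theta\in\mathcal{H}$ fixed, and $h:\mathbb{R}\to\mathbb{R}$ an even convex function that is increasing on $[0,\infty)$. Then \[ \min_{w\in\mathcal{H}}\max_{g\in\mathcal{G}}\ \langle w,g\rangle+h(\|\theta-g\|)\ \ge\ h\Big(\sqrt{\|\theta\|^2+G^2}\Big). \] *)

theory Defs
  imports "HOL-Analysis.Analysis"
begin

end

theory Submission
  imports Defs
begin

lemma orth_exists:
  fixes \<theta> :: "'a::real_inner"
  assumes "\<exists>u v::'a. u \<noteq> v \<and> independent {u, v}"
  shows "\<exists>z. z \<noteq> 0 \<and> inner z \<theta> = 0"
proof -
  obtain u v :: 'a where uv: "u \<noteq> v" "independent {u, v}" using assms by blast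
  have u0: "u \<noteq> 0" using uv(2) dependent_zero by blast
  have lin: "a = 0 \<and> b = 0" if h: "a *\<^sub>R u + b *\<^sub>R v = 0" for a b
  proof (rule ccontr)
    assume "\<not> (a = 0 \<and> b = 0)"
    then consider "a \<noteq> 0" | "b \<noteq> 0" by blast
    then show False
    proof cases
      case 1
      have "u = (- b / a) *\<^sub>R v" using h 1
        by (metis (no_types, lifting) add.commute add_uminus_conv_diff diff_zero divide_inverse_commute
            eq_vector_fraction_iff minus_add_cancel scaleR_minus_left scaleR_scaleR)
      hence "u \<in> span ({u,v} - {u})" using uv(1) by (simp add: span_base span_scale span_neg insert_Diff_if)
      thus False using uv(2) unfolding dependent_def by blast
    next
      case 2
      have "v = (- a / b) *\<^sub>R u" using h 2
        by (metis (no_types, lifting) add_uminus_conv_diff diff_zero divide_inverse_commute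
            eq_vector_fraction_iff minus_add_cancel scaleR_minus_left scaleR_scaleR)
      hence "v \<in> span ({u,v} - {v})" using uv(1) by (simp add: span_base span_scale span_neg insert_Diff_if)
      thus False using uv(2) unfolding dependent_def by blast
    qed
  qed
  show ?thesis
  proof (cases "inner v \<theta> = 0 \<and> inner u \<theta> = 0")
    case True thus ?thesis using u0 by blast
  next
    case False
    define z where "z = inner v \<theta> *\<^sub>R u + (- inner u \<theta>) *\<^sub>R v"
    have "z \<noteq> 0" using lin[of "inner v \<theta>" "- inner u \<theta>"] False z_def by auto
    moreover have "inner z \<theta> = 0" unfolding z_def by (simp add: inner_add_left inner_diff_left)
    ultimately show ?thesis by blast
  qed
qed

theorem lemma13:
  fixes \<theta> :: "'a::{real_inner, complete_space}"
    and G :: real and h :: "real \<Rightarrow> real"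
  assumes dim: "\<exists>u v::'a. u \<noteq> v \<and> independent {u, v}"
    and G_pos: "G > 0"
    and h_even: "\<And>x. h (- x) = h x"
    and h_convex: "convex_on UNIV h"
    and h_mono: "mono_on {0..} h"
  shows "\<forall>w::'a. (SUP g\<in>cball 0 G. inner w g + h (norm (\<theta> - g))) \<ge> h (sqrt ((norm \<theta>)\<^sup>2 + G\<^sup>2))"
proof
  fix w :: 'a
  obtain z :: 'a where z: "z \<noteq> 0" "inner z \<theta> = 0" using orth_exists[OF dim] by blast
  define z1 where "z1 = (if inner w z \<ge> 0 then z else - z)"
  have z1: "z1 \<noteq> 0" "inner z1 \<theta> = 0" "inner w z1 \<ge> 0" using z unfolding z1_def by auto
  define g where "g = (G / norm z1) *\<^sub>R z1"
  have ng: "norm g = G" unfolding g_def using z1 G_pos by simp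
  have gc: "g \<in> cball 0 G" using ng by simp
  have wg: "inner w g \<ge> 0" unfolding g_def using z1 G_pos by simp
  have tg: "inner \<theta> g = 0" unfolding g_def using z1 by (simp add: inner_commute)
  have "(norm (\<theta> - g))\<^sup>2 = (norm \<theta>)\<^sup>2 + G\<^sup>2"
    proof -
    have "(norm (\<theta> - g))\<^sup>2 = inner \<theta> \<theta> - 2 * inner \<theta> g + inner g g"
      by (simp add: power2_norm_eq_inner inner_diff_left inner_diff_right inner_commute)
    also have "\<dots> = (norm \<theta>)\<^sup>2 + G\<^sup>2" using tg ng by (simp add: power2_norm_eq_inner[symmetric])
    finally show ?thesis .
  qed
  hence nt: "norm (\<theta> - g) = sqrt ((norm \<theta>)\<^sup>2 + G\<^sup>2)"
    by (metis norm_ge_zero real_sqrt_unique)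
  have bdd: "bdd_above ((\<lambda>g. inner w g + h (norm (\<theta> - g))) ` cball 0 G)"
  proof (rule bdd_aboveI2)
    fix x :: 'a assume x: "x \<in> cball 0 G"
    hence nx: "norm x \<le> G" by simp
    have "inner w x \<le> norm w * G"
      by (meson Cauchy_Schwarz_ineq2 mult_left_mono norm_ge_zero order_trans nx abs_le_D1)
    moreover have "norm (\<theta> - x) \<le> norm \<theta> + G"
      using norm_triangle_ineq4[of \<theta> x] nx by linarith
    hence "h (norm (\<theta> - x)) \<le> h (norm \<theta> + G)"
      using h_mono G_pos by (intro mono_onD[OF h_mono]) auto
    ultimately show "inner w x + h (norm (\<theta> - x)) \<le> norm w * G + h (norm \<theta> + G)" by linarith
  qed
  show "(SUP g\<in>cball 0 G. inner w g + h (norm (\<theta> - g))) \<ge> h (sqrt ((norm \<theta>)\<^sup>2 + G\<^sup>2))"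
    by (rule cSUP_upper2[OF bdd gc]) (use wg nt in simp)
qed

end
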